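(* Let $\Delta$ be a nonempty $\Gamma$-semimodule. Then its dual satisfies $\Delta^*=(2\delta-1)-(\mathbb{Z}\setminus\Delta)=\{2\delta-1-x: x\in\mathbb{Z}\setminus\Delta\}$.
   Context: Let $m,n$ be coprime positive integers, $\Gamma=\{am+bn:a,b\in\mathbb{Z}_{\ge0}\}$ and $\delta=\frac{(m-1)(n-1)}2$. A $\Gamma$-semimodule is a subset $\Delta\subset\mathbb{Z}_{\ge0}$ with $\Delta+\Gamma\subset\Delta$. The dual semimodule is $\Delta^*=\{\varphi\in\mathbb{Z}:\varphi+\Delta\subset\Gamma\}$. *)

theory Defs
  imports Main
begin

definition numsemigroup :: "int \<Rightarrow> int \<Rightarrow> int set" where
  "numsemigroup m n = {a * m + b * n | a b :: int. a \<ge> 0 \<and> b \<ge> 0}"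

definition delta :: "int \<Rightarrow> int \<Rightarrow> int" where
  "delta m n = ((m - 1) * (n - 1)) div 2"

definition is_semimodule :: "int \<Rightarrow> int \<Rightarrow> int set \<Rightarrow> bool" where
  "is_semimodule m n D \<longleftrightarrow> D \<subseteq> {0..} \<and>
     (\<forall>x\<in>D. \<forall>g\<in>numsemigroup m n. x + g \<in> D)"

definition dual_semimodule :: "int \<Rightarrow> int \<Rightarrow> int set \<Rightarrow> int set" where
  "dual_semimodule m n D = {phi. \<forall>x\<in>D. phi + x \<in> numsemigroup m n}"

end

theory Submission
  imports Defs
begin

lemma frob:
  fixes m n :: int
  assumes "m > 0" "n > 0" "coprime m n"
  shows "2 * delta m n - 1 = m*n - m - n"
proof -
  have "\<not> (even m \<and> even n)" using assms(3)
    by (metis coprime_common_divisor dvd_refl odd_one)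
  hence "even ((m-1)*(n-1))" by auto
  thus ?thesis unfolding delta_def by (auto simp: algebra_simps elim!: evenE)
qed

lemma not_both:
  fixes m n z :: int
  assumes "m > 0" "n > 0" "coprime m n"
    and "z \<in> numsemigroup m n" "m*n - m - n - z \<in> numsemigroup m n"
  shows False
proof -
  obtain a b where ab: "z = a*m + b*n" "a \<ge> 0" "b \<ge> 0" using assms(4) unfolding numsemigroup_def by auto
  obtain c d where cd: "m*n - m - n - z = c*m + d*n" "c \<ge> 0" "d \<ge> 0" using assms(5) unfolding numsemigroup_def by auto
  define A where "A = a + c + 1"
  define B where "B = b + d + 1"
  have eq: "m*n = A*m + B*n" using ab cd unfolding A_def B_def by (simp add: algebra_simps)
  have "m dvd B*n" using eq by (metis dvd_add_right_iff dvd_triv_left dvd_triv_right)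
  hence "m dvd B" using assms(3) by (simp add: coprime_dvd_mult_left_iff)
  moreover have "B > 0" using ab cd B_def by simp
  ultimately have "B \<ge> m" by (simp add: zdvd_imp_le)
  have "A*m = m*n - B*n" using eq by simp
  hence "n dvd A*m" by simp
  hence "n dvd A" using assms(3) by (simp add: coprime_dvd_mult_left_iff coprime_commute)
  moreover have "A > 0" using ab cd A_def by simp
  ultimately have "A \<ge> n" by (simp add: zdvd_imp_le)
  have "A*m \<ge> n*m" using \<open>A \<ge> n\<close> assms by simp
  moreover have "B*n \<ge> m*n" using \<open>B \<ge> m\<close> assms by simp
  moreover have "m*n > 0" using assms by simp
  ultimately show False using eq by (simp add: algebra_simps)
qed

lemma one_of:
  fixes m n z :: int
  assumes "m > 0" "n > 0" "coprime m n"
  shows "z \<in> numsemigroup m n \<or> m*n - m - n - z \<in> numsemigroup m n"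
proof -
  obtain u v where uv: "u*m + v*n = 1" using bezout_int[of m n] assms(3) by auto
  define a where "a = (z*u) mod n"
  define b where "b = z*v + ((z*u) div n) * m"
  have z: "z = a*m + b*n"
  proof -
    have "z = (z*u)*m + (z*v)*n" using uv by (metis mult.right_neutral distrib_left mult.assoc)
    also have "z*u = a + (z*u div n)*n" unfolding a_def by simp
    finally show ?thesis unfolding b_def by (simp add: algebra_simps)
  qed
  have a: "0 \<le> a" "a < n" unfolding a_def using assms by auto
  show ?thesis
  proof (cases "b \<ge> 0")
    case True
    thus ?thesis using z a unfolding numsemigroup_def by blast
  next
    case False
    have "m*n - m - n - z = (n-1-a)*m + (-b-1)*n" using z by (simp add: algebra_simps)
    moreover have "n-1-a \<ge> 0" "-b-1 \<ge> 0" using a False by auto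
    ultimately show ?thesis unfolding numsemigroup_def by blast
  qed
qed

theorem mainTheorem9:
  fixes m n :: int and D :: "int set"
  assumes "m > 0" and "n > 0" and "coprime m n"
    and "is_semimodule m n D" and "D \<noteq> {}"
  shows "dual_semimodule m n D = {2 * delta m n - 1 - x | x. x \<notin> D}"
proof -
  have F: "2 * delta m n - 1 = m*n - m - n" using frob assms by blast
  have "phi \<in> dual_semimodule m n D \<longleftrightarrow> m*n - m - n - phi \<notin> D" for phi
  proof
    assume h: "phi \<in> dual_semimodule m n D"
    show "m*n - m - n - phi \<notin> D"
    proof
      assume "m*n - m - n - phi \<in> D"
      hence "phi + (m*n - m - n - phi) \<in> numsemigroup m n" using h unfolding dual_semimodule_def by blast
      moreover have "(0::int) \<in> numsemigroup m n" unfolding numsemigroup_def by force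
      ultimately show False using not_both[OF assms(1-3), of 0] by (simp add: algebra_simps)
    qed
  next
    assume h: "m*n - m - n - phi \<notin> D"
    show "phi \<in> dual_semimodule m n D" unfolding dual_semimodule_def
    proof (intro CollectI ballI)
      fix x assume x: "x \<in> D"
      show "phi + x \<in> numsemigroup m n"
      proof (rule ccontr)
        assume "phi + x \<notin> numsemigroup m n"
        hence "m*n - m - n - (phi + x) \<in> numsemigroup m n" using one_of[OF assms(1-3)] by blast
        hence "x + (m*n - m - n - (phi + x)) \<in> D" using x assms(4) unfolding is_semimodule_def by blast
        moreover have "x + (m*n - m - n - (phi + x)) = m*n - m - n - phi" by simp
        ultimately show False using h by metis
      qed
    qed
  qed
  hence "phi \<in> dual_semimodule m n D \<longleftrightarrow> phi \<in> {2 * delta m n - 1 - x | x. x \<notin> D}" for phi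
    unfolding F by (auto intro!: exI[of _ "m*n - m - n - phi"])
  thus ?thesis by blast
qed

end
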